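(* There exist absolute constants $c,\bar c>0$ such that the following holds. Let $d\ge1$ and let $u\in\mathbb C^n$ be such that there exist disjoint sets $J_1,J_2\subset[n]$ with $|J_1|=|J_2|=m$ and $\rho>0$ with $|u_{j_1}-u_{j_2}|\ge\rho/\sqrt n$ for all $j_1\in J_1$, $j_2\in J_2$. Then $$\mathbb P\Big(\|(S_n^d+Z_n)u\|_2\le c\rho\min\Big\{\sqrt{\tfrac{md}{n}},1\Big\}\Big)\le\exp\big(-\bar c\min(md,n)\big).$$
   Context: $S_n^d=\sum_{\ell=1}^dP_n^\ell$ with $P_n^\ell(i,j)=\mathbf 1(\pi_n^\ell(i)=j)$ for independent uniformly random permutations of $[n]$. $Z_n$ is a deterministic complex $n\times n$ matrix with $Z_n\mathbf 1=\zeta\mathbf 1$, $Z_n^*\mathbf 1=\bar\zeta\mathbf 1$ for some $\zeta\in\mathbb C$ and $\sup\{\|Z_nu\|_2:\|u\|_2=1,u\perp\mathbf 1\}\le n^{\gamma_0}$ for some fixed $\gamma_0\ge1$, where $\mathbf 1$ is the all-ones vector. *)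

theory Defs
  imports "HOL-Probability.Probability"
begin

text \<open>Vectors in C^n are functions nat => complex (indices 0..n-1),
  n x n matrices are functions nat => nat => complex (indices below n).\<close>

definition vnorm :: "nat \<Rightarrow> (nat \<Rightarrow> complex) \<Rightarrow> real" where
  "vnorm n v = sqrt (\<Sum>i<n. (cmod (v i))^2)"

definition mat_vec :: "nat \<Rightarrow> (nat \<Rightarrow> nat \<Rightarrow> complex) \<Rightarrow> (nat \<Rightarrow> complex) \<Rightarrow> (nat \<Rightarrow> complex)" where
  "mat_vec n A v = (\<lambda>i. \<Sum>j<n. A i j * v j)"

definition perm_mat :: "(nat \<Rightarrow> nat) \<Rightarrow> nat \<Rightarrow> nat \<Rightarrow> complex" where
  "perm_mat p i j = (if p i = j then 1 else 0)"

definition S_mat :: "nat \<Rightarrow> (nat \<Rightarrow> nat \<Rightarrow> nat) \<Rightarrow> nat \<Rightarrow> nat \<Rightarrow> complex" where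
  "S_mat d ps i j = (\<Sum>l<d. perm_mat (ps l) i j)"

definition perm_tuples :: "nat \<Rightarrow> nat \<Rightarrow> (nat \<Rightarrow> nat \<Rightarrow> nat) set" where
  "perm_tuples n d = PiE {..<d} (\<lambda>_. {p. p permutes {..<n}})"

definition perm_space :: "nat \<Rightarrow> nat \<Rightarrow> (nat \<Rightarrow> nat \<Rightarrow> nat) pmf" where
  "perm_space n d = pmf_of_set (perm_tuples n d)"

end

theory Submission
  imports Defs
begin


lemma indep_set:
  fixes R :: "'a set" and g :: "'a \<Rightarrow> 'a"
  assumes "finite R" "\<forall>i\<in>R. g i \<noteq> i"
  shows "\<exists>I\<subseteq>R. card R \<le> 3 * card I \<and> (\<forall>i\<in>I. g i \<notin> I)"
  using assms
proof (induction "card R" arbitrary: R rule: less_induct)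
  case less
  show ?case
  proof (cases "R = {}")
    case True then show ?thesis by auto
  next
    case False
    have "\<exists>v\<in>R. card {w\<in>R. g w = v} \<le> 1"
    proof (rule ccontr)
      assume "\<not> ?thesis"
      then have h: "\<forall>v\<in>R. 2 \<le> card {w\<in>R. g w = v}" by auto
      have "card (\<Union>v\<in>R. {w\<in>R. g w = v}) = (\<Sum>v\<in>R. card {w\<in>R. g w = v})"
        by (rule card_UN_disjoint) (use less.prems in auto)
      moreover have "(\<Union>v\<in>R. {w\<in>R. g w = v}) \<subseteq> R" by auto
      hence "card (\<Union>v\<in>R. {w\<in>R. g w = v}) \<le> card R" using less.prems by (simp add: card_mono)
      moreover have "(\<Sum>v\<in>R. (2::nat)) \<le> (\<Sum>v\<in>R. card {w\<in>R. g w = v})"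
        by (rule sum_mono) (use h in auto)
      moreover have "card R > 0" using False less.prems by auto
      ultimately show False by simp
    qed
    then obtain v where v: "v \<in> R" "card {w\<in>R. g w = v} \<le> 1" by auto
    define W where "W = {w\<in>R. g w = v}"
    define R' where "R' = R - {v, g v} - W"
    have fR': "finite R'" using less.prems unfolding R'_def by auto
    have "card R' < card R" unfolding R'_def using v less.prems
      by (intro psubset_card_mono) auto
    then obtain I' where I': "I' \<subseteq> R'" "card R' \<le> 3 * card I'" "\<forall>i\<in>I'. g i \<notin> I'"
      using less.hyps[of R'] fR' less.prems unfolding R'_def by auto
    define I where "I = insert v I'"
    have vI': "v \<notin> I'" using I' unfolding R'_def by auto
    have "R \<subseteq> R' \<union> ({v, g v} \<union> W)" unfolding R'_def by auto
    hence "card R \<le> card (R' \<union> ({v, g v} \<union> W))" using less.prems fR' unfolding W_def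
      by (intro card_mono) auto
    also have "\<dots> \<le> card R' + card ({v, g v} \<union> W)" by (rule card_Un_le)
    also have "card ({v, g v} \<union> W) \<le> card {v, g v} + card W" by (rule card_Un_le)
    also have "card {v, g v} \<le> 2" by (simp add: card_insert_le_m1)
    finally have "card R \<le> card R' + 3" using v unfolding W_def by linarith
    moreover have "card I = card I' + 1" unfolding I_def using vI' I' fR'
      by (simp add: finite_subset)
    moreover have "\<forall>i\<in>I. g i \<notin> I"
    proof
      fix i assume "i \<in> I"
      show "g i \<notin> I"
      proof (cases "i = v")
        case True
        then show ?thesis using I' less.prems v unfolding I_def R'_def by auto
      next
        case False
        hence "i \<in> I'" using \<open>i \<in> I\<close> I_def by auto
        hence "i \<notin> W" using I' unfolding R'_def by auto
        hence "g i \<noteq> v" using \<open>i \<in> I'\<close> I' unfolding W_def R'_def by auto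
        then show ?thesis using I' \<open>i \<in> I'\<close> unfolding I_def by auto
      qed
    qed
    moreover have "I \<subseteq> R" using I' v unfolding I_def R'_def by auto
    ultimately show ?thesis using I' by (intro exI[of _ I]) auto
  qed
qed

lemma pow_split:
  assumes "finite X" "D \<subseteq> X"
  shows "card {E. E \<subseteq> X \<and> P E} = (\<Sum>E2\<in>Pow (X - D). card {E1. E1 \<subseteq> D \<and> P (E1 \<union> E2)})"
proof -
  have "bij_betw (\<lambda>E. (E - D, E \<inter> D)) {E. E \<subseteq> X \<and> P E}
          (Sigma (Pow (X - D)) (\<lambda>E2. {E1. E1 \<subseteq> D \<and> P (E1 \<union> E2)}))"
  proof (rule bij_betw_byWitness[where f' = "\<lambda>(E2, E1). E1 \<union> E2"])
    show "\<forall>a\<in>{E. E \<subseteq> X \<and> P E}. (case (a - D, a \<inter> D) of (E2, E1) \<Rightarrow> E1 \<union> E2) = a" by auto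
    show "\<forall>a'\<in>Sigma (Pow (X - D)) (\<lambda>E2. {E1. E1 \<subseteq> D \<and> P (E1 \<union> E2)}).
       ((case a' of (E2, E1) \<Rightarrow> E1 \<union> E2) - D, (case a' of (E2, E1) \<Rightarrow> E1 \<union> E2) \<inter> D) = a'"
      by auto
    show "(\<lambda>E. (E - D, E \<inter> D)) ` {E. E \<subseteq> X \<and> P E} \<subseteq> Sigma (Pow (X - D)) (\<lambda>E2. {E1. E1 \<subseteq> D \<and> P (E1 \<union> E2)})"
    proof
      fix z assume "z \<in> (\<lambda>E. (E - D, E \<inter> D)) ` {E. E \<subseteq> X \<and> P E}"
      then obtain E where "E \<subseteq> X" "P E" "z = (E - D, E \<inter> D)" by auto
      moreover have "E \<inter> D \<union> (E - D) = E" by auto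
      ultimately show "z \<in> Sigma (Pow (X - D)) (\<lambda>E2. {E1. E1 \<subseteq> D \<and> P (E1 \<union> E2)})" by auto
    qed
    show "(\<lambda>(E2, E1). E1 \<union> E2) ` Sigma (Pow (X - D)) (\<lambda>E2. {E1. E1 \<subseteq> D \<and> P (E1 \<union> E2)}) \<subseteq> {E. E \<subseteq> X \<and> P E}"
      using assms by auto
  qed
  hence "card {E. E \<subseteq> X \<and> P E} = card (Sigma (Pow (X - D)) (\<lambda>E2. {E1. E1 \<subseteq> D \<and> P (E1 \<union> E2)}))"
    by (rule bij_betw_same_card)
  also have "\<dots> = (\<Sum>E2\<in>Pow (X - D). card {E1. E1 \<subseteq> D \<and> P (E1 \<union> E2)})"
    using assms by (intro card_SigmaI) (auto intro: finite_subset[of _ "Pow D"] finite_subset)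
  finally show ?thesis .
qed

lemma card_small_subsets:
  assumes "finite I"
  shows "card {S. S \<subseteq> I \<and> card S < q} = (\<Sum>j<q. card I choose j)"
proof -
  have "{S. S \<subseteq> I \<and> card S < q} = (\<Union>j<q. {S. S \<subseteq> I \<and> card S = j})" by auto
  also have "card \<dots> = (\<Sum>j<q. card {S. S \<subseteq> I \<and> card S = j})"
    using assms by (intro card_UN_disjoint) (auto intro: finite_subset)
  also have "\<dots> = (\<Sum>j<q. card I choose j)" using assms by (simp add: n_subsets)
  finally show ?thesis .
qed

lemma binom_tail:
  "real (\<Sum>j<q. r choose j) \<le> 8 ^ q * (9/8) ^ r"
proof -
  have "real (\<Sum>j<q. r choose j) = (\<Sum>j<q. real (r choose j))" by simp
  also have "\<dots> \<le> (\<Sum>j<q. real (r choose j) * (8 ^ q * (1/8) ^ j))"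
  proof (intro sum_mono)
    fix j assume "j \<in> {..<q}"
    hence "(8::real) ^ j \<le> 8 ^ q" by (intro power_increasing) auto
    hence "1 \<le> (8::real) ^ q * (1/8) ^ j" by (simp add: power_one_over field_simps)
    thus "real (r choose j) \<le> real (r choose j) * (8 ^ q * (1/8) ^ j)"
      by (metis mult.right_neutral mult_left_mono of_nat_0_le_iff)
  qed
  also have "\<dots> \<le> (\<Sum>j\<le>r. real (r choose j) * (8 ^ q * (1/8) ^ j))"
  proof -
    have "(\<Sum>j<q. real (r choose j) * (8 ^ q * (1/8) ^ j)) = (\<Sum>j\<in>{..<q} \<inter> {..r}. real (r choose j) * (8 ^ q * (1/8) ^ j))"
      by (intro sum.mono_neutral_right) auto
    also have "\<dots> \<le> (\<Sum>j\<le>r. real (r choose j) * (8 ^ q * (1/8) ^ j))"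
      by (intro sum_mono2) auto
    finally show ?thesis .
  qed
  also have "\<dots> = 8 ^ q * (\<Sum>j\<le>r. real (r choose j) * (1/8) ^ j * 1 ^ (r - j))"
    by (simp add: sum_distrib_left mult_ac)
  also have "\<dots> = 8 ^ q * (1/8 + 1) ^ r"
  proof -
    have "(1/8 + 1::real)^r = (\<Sum>j\<le>r. real (r choose j) * (1/8)^j * 1 ^ (r - j))"
      using binomial_ring[of "1/8::real" 1 r] by simp
    thus ?thesis by simp
  qed
  finally show ?thesis by simp
qed

lemma pow_le_fact:
  "real s ^ s \<le> 3 ^ s * fact s"
proof (induction s)
  case 0 then show ?case by simp
next
  case (Suc s)
  show ?case
  proof (cases "s = 0")
    case True then show ?thesis by simp
  next
    case False
    have "(1 + 1 / real s) ^ s \<le> exp (1 / real s) ^ s"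
      by (intro power_mono) (auto simp: exp_ge_add_one_self add.commute)
    also have "\<dots> = exp 1" using False by (simp add: exp_of_nat_mult[symmetric])
    also have "\<dots> \<le> 3" by (rule exp_le)
    finally have e: "(1 + 1 / real s) ^ s \<le> 3" .
    have "real (Suc s) ^ s = real s ^ s * (1 + 1 / real s) ^ s"
      using False by (simp add: power_mult_distrib[symmetric] field_simps)
    also have "\<dots> \<le> real s ^ s * 3" by (intro mult_left_mono e) auto
    finally have "real (Suc s) ^ s \<le> 3 * real s ^ s" by simp
    also have "\<dots> \<le> 3 * (3 ^ s * fact s)" using Suc.IH by simp
    finally have "real (Suc s) ^ s \<le> 3 ^ Suc s * fact s" by simp
    hence "real (Suc s) * real (Suc s) ^ s \<le> real (Suc s) * (3 ^ Suc s * fact s)"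
      by (intro mult_left_mono) auto
    then show ?thesis by (simp add: mult_ac)
  qed
qed



definition Fset :: "'a set \<Rightarrow> 'a set \<Rightarrow> 'a set \<Rightarrow> ('a \<Rightarrow> 'a) set" where
  "Fset N U A = {p. p permutes N \<and> (\<forall>i\<in>N. p i \<in> A \<longrightarrow> i \<in> U)}"

lemma Fset_finite: "finite N \<Longrightarrow> finite (Fset N U A)"
  unfolding Fset_def by (rule finite_subset[OF _ finite_permutations]) auto

lemma Fset_step:
  assumes N: "finite N" "U \<subseteq> N" "insert a A \<subseteq> N" "a \<notin> A"
  shows "(card N - card A) * card (Fset N U (insert a A)) \<le> (card U - card A) * card (Fset N U A)"
proof -
  define Q where "Q = {(p, y). p \<in> Fset N U A \<and> y \<in> N - A \<and> Transposition.transpose a y \<circ> p \<in> Fset N U (insert a A)}"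
  have fA: "finite A" using N(3) by (intro finite_subset[OF _ N(1)]) auto
  have "inj_on (\<lambda>(y, p'). (Transposition.transpose a y \<circ> p', y)) ((N - A) \<times> Fset N U (insert a A))"
  proof (rule inj_onI)
    fix x z assume "(\<lambda>(y, p'). (Transposition.transpose a y \<circ> p', y)) x = (\<lambda>(y, p'). (Transposition.transpose a y \<circ> p', y)) z"
    moreover obtain y p where x: "x = (y, p)" by fastforce
    moreover obtain y' p' where z: "z = (y', p')" by fastforce
    ultimately have e: "Transposition.transpose a y \<circ> p = Transposition.transpose a y \<circ> p'" "y = y'" by auto
    have "p = p'"
    proof
      fix i
      have "Transposition.transpose a y (p i) = Transposition.transpose a y (p' i)"
        using e(1) by (metis comp_apply)
      thus "p i = p' i" by (metis transpose_involutory)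
    qed
    thus "x = z" using x z e by simp
  qed
  moreover have "(\<lambda>(y, p'). (Transposition.transpose a y \<circ> p', y)) ` ((N - A) \<times> Fset N U (insert a A)) \<subseteq> Q"
  proof clarify
    fix y p'
    assume y: "y \<in> N" "y \<notin> A" and p': "p' \<in> Fset N U (insert a A)"
    have perm: "Transposition.transpose a y \<circ> p' permutes N"
    proof (rule permutes_compose)
      show "p' permutes N" using p' unfolding Fset_def by simp
      show "Transposition.transpose a y permutes N" using y N by (intro permutes_swap_id) auto
    qed
    have "\<forall>i\<in>N. (Transposition.transpose a y \<circ> p') i \<in> A \<longrightarrow> i \<in> U"
    proof (intro ballI impI)
      fix i assume i: "i \<in> N" "(Transposition.transpose a y \<circ> p') i \<in> A"
      have "p' i \<in> A" using i(2) y N(4) by (cases "p' i = a"; cases "p' i = y"; auto)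
      thus "i \<in> U" using p' i(1) unfolding Fset_def by auto
    qed
    moreover have "Transposition.transpose a y \<circ> (Transposition.transpose a y \<circ> p') = p'"
      by (simp add: fun_eq_iff)
    ultimately show "(Transposition.transpose a y \<circ> p', y) \<in> Q"
      unfolding Q_def Fset_def using perm y p' by (auto simp: Fset_def)
  qed
  moreover have fQ: "finite Q"
  proof (rule finite_subset[of _ "Fset N U A \<times> N"])
    show "Q \<subseteq> Fset N U A \<times> N" unfolding Q_def by auto
    show "finite (Fset N U A \<times> N)" using N by (simp add: Fset_finite)
  qed
  ultimately have "card ((N - A) \<times> Fset N U (insert a A)) \<le> card Q"
    using card_inj_on_le by blast
  hence low: "(card N - card A) * card (Fset N U (insert a A)) \<le> card Q"
    using N fA by (simp add: card_Diff_subset card_cartesian_product)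
  have sub: "Q \<subseteq> Sigma (Fset N U A) (\<lambda>p. p ` U - A)"
  proof (rule subsetI)
    fix z assume z: "z \<in> Q"
    obtain p y where zz: "z = (p, y)" by fastforce
    have p: "p \<in> Fset N U A" and y: "y \<in> N" "y \<notin> A"
      and t: "Transposition.transpose a y \<circ> p \<in> Fset N U (insert a A)" using z unfolding zz Q_def by auto
    have pp: "p permutes N" using p unfolding Fset_def by auto
    obtain i where i: "i \<in> N" "p i = y" using pp y permutes_image by (metis imageE)
    have "(Transposition.transpose a y \<circ> p) i = a" using i by simp
    hence "i \<in> U" using t i unfolding Fset_def by auto
    hence "y \<in> p ` U" using i by auto
    thus "z \<in> Sigma (Fset N U A) (\<lambda>p. p ` U - A)" using zz p y by auto
  qed
  have finS: "finite (Sigma (Fset N U A) (\<lambda>p. p ` U - A))" using N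
    by (intro finite_SigmaI Fset_finite) (auto intro: finite_subset)
  have "card Q \<le> card (Sigma (Fset N U A) (\<lambda>p. p ` U - A))"
    by (rule card_mono[OF finS sub])
  also have "\<dots> = (\<Sum>p\<in>Fset N U A. card (p ` U - A))"
    using N by (intro card_SigmaI Fset_finite) (auto intro: finite_subset)
  also have "\<dots> = (\<Sum>p\<in>Fset N U A. card U - card A)"
  proof (rule sum.cong[OF refl])
    fix p assume p: "p \<in> Fset N U A"
    have pp: "p permutes N" using p unfolding Fset_def by auto
    have "A \<subseteq> p ` U"
    proof
      fix x assume x: "x \<in> A"
      have "x \<in> N" using x N by auto
      then obtain i where i: "i \<in> N" "p i = x" using pp permutes_image by (metis imageE)
      hence "i \<in> U" using p x unfolding Fset_def by auto
      thus "x \<in> p ` U" using i by auto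
    qed
    moreover have "card (p ` U) = card U"
      using card_image[OF inj_on_subset[OF permutes_inj[OF pp] subset_UNIV]] by simp
    ultimately show "card (p ` U - A) = card U - card A"
      using fA by (simp add: card_Diff_subset)
  qed
  also have "\<dots> = (card U - card A) * card (Fset N U A)" by simp
  finally show ?thesis using low by linarith
qed

lemma Fset_bound:
  assumes N: "finite N" "U \<subseteq> N" "A \<subseteq> N"
  shows "real (card (Fset N U A)) \<le> (real (card U) / real (card N)) ^ card A * fact (card N)"
proof -
  have fA: "finite A" using N(3) by (intro finite_subset[OF _ N(1)]) auto
  show ?thesis using fA N(3)
  proof (induction A rule: finite_induct)
    case empty
    then show ?case using N by (simp add: Fset_def card_permutations)
  next
    case (insert a A)
    let ?n = "card N" and ?s = "card U" and ?j = "card A"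
    have st: "(?n - ?j) * card (Fset N U (insert a A)) \<le> (?s - ?j) * card (Fset N U A)"
      using Fset_step[of N U a A] insert N by auto
    have jn: "?j < ?n" using insert N by (metis psubsetI psubset_card_mono insert_subset)
    have sn: "?s \<le> ?n" using N by (simp add: card_mono)
    have "real (?n - ?j) * card (Fset N U (insert a A)) \<le> real (?s - ?j) * card (Fset N U A)"
      using st by (metis of_nat_le_iff of_nat_mult)
    hence "card (Fset N U (insert a A)) \<le> real (?s - ?j) / real (?n - ?j) * card (Fset N U A)"
      using jn by (simp add: field_simps)
    also have "real (?s - ?j) / real (?n - ?j) \<le> real ?s / real ?n"
    proof (cases "?j \<le> ?s")
      case True
      have "real (?s - ?j) * real ?n \<le> real ?s * real (?n - ?j)"
        using True jn sn by (simp add: of_nat_diff algebra_simps mult_left_mono)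
      thus ?thesis using jn by (simp add: field_simps)
    next
      case False thus ?thesis by simp
    qed
    hence "real (?s - ?j) / real (?n - ?j) * card (Fset N U A) \<le> real ?s / real ?n * card (Fset N U A)"
      by (intro mult_right_mono) auto
    also have "\<dots> \<le> real ?s / real ?n * ((real ?s / real ?n) ^ ?j * fact ?n)"
      using insert by (intro mult_left_mono) auto
    finally show ?case using insert by (simp add: mult_ac)
  qed
qed



locale lsetup =
  fixes n d m :: nat and a b :: "nat \<Rightarrow> nat" and u w :: "nat \<Rightarrow> complex" and h :: real
  assumes a_inj: "inj_on a {..<m}" and b_inj: "inj_on b {..<m}"
    and a_rng: "a ` {..<m} \<subseteq> {..<n}" and b_rng: "b ` {..<m} \<subseteq> {..<n}"
    and ab_disj: "a ` {..<m} \<inter> b ` {..<m} = {}"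
    and jump: "\<forall>k<m. 2 * h \<le> cmod (u (a k) - u (b k))"
begin

definition tau :: "nat set \<Rightarrow> nat \<Rightarrow> nat" where
  "tau F x = (if x \<in> a ` F then b (the_inv_into {..<m} a x)
              else if x \<in> b ` F then a (the_inv_into {..<m} b x) else x)"

lemma ab_ne: "k < m \<Longrightarrow> k' < m \<Longrightarrow> a k \<noteq> b k'"
  using ab_disj by auto

lemma tau_a: "F \<subseteq> {..<m} \<Longrightarrow> k < m \<Longrightarrow> tau F (a k) = (if k \<in> F then b k else a k)"
proof -
  assume F: "F \<subseteq> {..<m}" and k: "k < m"
  show ?thesis
  proof (cases "k \<in> F")
    case True
    have "the_inv_into {..<m} a (a k) = k" using a_inj k by (simp add: the_inv_into_f_f)
    then show ?thesis using True unfolding tau_def by auto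
  next
    case False
    have "a k \<notin> a ` F" using False a_inj F k by (auto dest: inj_onD)
    moreover have "a k \<notin> b ` F" using F k ab_ne by auto
    ultimately show ?thesis using False unfolding tau_def by auto
  qed
qed

lemma tau_b: "F \<subseteq> {..<m} \<Longrightarrow> k < m \<Longrightarrow> tau F (b k) = (if k \<in> F then a k else b k)"
proof -
  assume F: "F \<subseteq> {..<m}" and k: "k < m"
  have na: "b k \<notin> a ` F" using F k ab_ne by fastforce
  show ?thesis
  proof (cases "k \<in> F")
    case True
    have "the_inv_into {..<m} b (b k) = k" using b_inj k by (simp add: the_inv_into_f_f)
    then show ?thesis using True na unfolding tau_def by auto
  next
    case False
    have "b k \<notin> b ` F" using False b_inj F k by (auto dest: inj_onD)
    then show ?thesis using False na unfolding tau_def by auto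
  qed
qed

lemma tau_other: "F \<subseteq> {..<m} \<Longrightarrow> x \<notin> a ` {..<m} \<Longrightarrow> x \<notin> b ` {..<m} \<Longrightarrow> tau F x = x"
  unfolding tau_def by auto

lemma tau_cases:
  assumes "F \<subseteq> {..<m}"
  obtains k where "k < m" "x = a k" | k where "k < m" "x = b k" | "x \<notin> a ` {..<m}" "x \<notin> b ` {..<m}"
  by blast

lemma tau_invol: "F \<subseteq> {..<m} \<Longrightarrow> tau F (tau F x) = x"
proof -
  assume F: "F \<subseteq> {..<m}"
  show ?thesis
  proof (cases rule: tau_cases[OF F, of x])
    case (1 k) thus ?thesis using F by (simp add: tau_a tau_b)
  next
    case (2 k) thus ?thesis using F by (simp add: tau_a tau_b)
  next
    case 3 thus ?thesis using F by (simp add: tau_other)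
  qed
qed

lemma tau_range: "F \<subseteq> {..<m} \<Longrightarrow> x < n \<Longrightarrow> tau F x < n"
proof -
  assume F: "F \<subseteq> {..<m}" and x: "x < n"
  show ?thesis
  proof (cases rule: tau_cases[OF F, of x])
    case (1 k) thus ?thesis using F a_rng b_rng by (auto simp add: tau_a)
  next
    case (2 k) thus ?thesis using F a_rng b_rng by (auto simp add: tau_b)
  next
    case 3 thus ?thesis using F x by (simp add: tau_other)
  qed
qed

lemma tau_permutes: "F \<subseteq> {..<m} \<Longrightarrow> tau F permutes {..<n}"
proof -
  assume F: "F \<subseteq> {..<m}"
  have out: "\<And>x. x \<notin> {..<n} \<Longrightarrow> tau F x = x"
  proof -
    fix x assume "x \<notin> {..<n}"
    hence "x \<notin> a ` {..<m}" "x \<notin> b ` {..<m}" using a_rng b_rng by auto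
    thus "tau F x = x" using F by (rule tau_other[rotated -2])
  qed
  show ?thesis unfolding permutes_def
  proof (intro conjI allI impI)
    fix x assume "x \<notin> {..<n}" thus "tau F x = x" by (rule out)
  next
    fix y show "\<exists>!x. tau F x = y"
    proof (rule ex1I[of _ "tau F y"])
      show "tau F (tau F y) = y" using F by (rule tau_invol)
    next
      fix x assume "tau F x = y"
      thus "x = tau F y" using tau_invol[OF F, of x] by simp
    qed
  qed
qed

definition T where "T = perm_tuples n d"
definition X where "X = {..<d} \<times> {..<m}"
definition sl :: "(nat \<times> nat) set \<Rightarrow> nat \<Rightarrow> nat set" where "sl E l = {k. (l, k) \<in> E}"
definition Phi :: "(nat \<times> nat) set \<Rightarrow> (nat \<Rightarrow> nat \<Rightarrow> nat) \<Rightarrow> (nat \<Rightarrow> nat \<Rightarrow> nat)" where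
  "Phi E \<sigma> = (\<lambda>l. if l < d then tau (sl E l) \<circ> \<sigma> l else \<sigma> l)"

lemma sl_sub: "E \<subseteq> X \<Longrightarrow> sl E l \<subseteq> {..<m}"
  unfolding sl_def X_def by auto

lemma T_iff: "\<sigma> \<in> T \<longleftrightarrow> (\<forall>l<d. \<sigma> l permutes {..<n}) \<and> (\<forall>l. l \<ge> d \<longrightarrow> \<sigma> l = undefined)"
  unfolding T_def perm_tuples_def PiE_def extensional_def by auto

lemma T_range: "\<sigma> \<in> T \<Longrightarrow> l < d \<Longrightarrow> i < n \<Longrightarrow> \<sigma> l i < n"
  using T_iff permutes_in_image by fastforce

lemma Phi_T: "E \<subseteq> X \<Longrightarrow> \<sigma> \<in> T \<Longrightarrow> Phi E \<sigma> \<in> T"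
proof -
  assume E: "E \<subseteq> X" and s: "\<sigma> \<in> T"
  have "\<And>l. l < d \<Longrightarrow> tau (sl E l) \<circ> \<sigma> l permutes {..<n}"
    using s unfolding T_iff by (metis permutes_compose tau_permutes[OF sl_sub[OF E]])
  thus ?thesis using s unfolding T_iff Phi_def by auto
qed

lemma Phi_invol: "E \<subseteq> X \<Longrightarrow> Phi E (Phi E \<sigma>) = \<sigma>"
  unfolding Phi_def using tau_invol[OF sl_sub] by (auto simp: fun_eq_iff)

lemma Phi_bij: "E \<subseteq> X \<Longrightarrow> bij_betw (Phi E) T T"
  by (rule bij_betw_byWitness[where f' = "Phi E"]) (auto simp: Phi_invol Phi_T)

lemma finite_T: "finite T"
  unfolding T_def perm_tuples_def by (intro finite_PiE) (auto intro: finite_permutations)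

lemma card_T: "card T = fact n ^ d"
  unfolding T_def perm_tuples_def by (simp add: card_PiE card_permutations)

lemma T_ne: "T \<noteq> {}"
proof -
  have "(\<lambda>l. if l < d then id else undefined) \<in> T" unfolding T_iff by (auto intro: permutes_id)
  thus ?thesis by auto
qed

lemma finite_X: "finite X" unfolding X_def by auto
lemma card_X: "card X = m * d" unfolding X_def by (simp add: card_cartesian_product)

end


context lsetup begin

definition fv :: "(nat \<Rightarrow> nat \<Rightarrow> nat) \<Rightarrow> nat \<Rightarrow> complex" where
  "fv \<sigma> i = (\<Sum>l<d. u (\<sigma> l i)) + w i"
definition good where "good \<sigma> = {i. i < n \<and> h \<le> cmod (fv \<sigma> i)}"
definition R where "R \<sigma> = {i. i < n \<and> (\<exists>l<d. \<exists>k<m. \<sigma> l i = a k)}"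
definition dsel where "dsel \<sigma> i = (SOME lk. fst lk < d \<and> snd lk < m \<and> \<sigma> (fst lk) i = a (snd lk))"
definition og where "og \<sigma> i = inv (\<sigma> (fst (dsel \<sigma> i))) (b (snd (dsel \<sigma> i)))"
definition indep where "indep \<sigma> I = (I \<subseteq> R \<sigma> \<and> (\<forall>i\<in>I. og \<sigma> i \<notin> I))"

lemma dsel: "i \<in> R \<sigma> \<Longrightarrow> fst (dsel \<sigma> i) < d \<and> snd (dsel \<sigma> i) < m \<and> \<sigma> (fst (dsel \<sigma> i)) i = a (snd (dsel \<sigma> i))"
proof -
  assume "i \<in> R \<sigma>"
  then obtain l k where "l < d" "k < m" "\<sigma> l i = a k" unfolding R_def by auto
  hence "\<exists>lk. fst lk < d \<and> snd lk < m \<and> \<sigma> (fst lk) i = a (snd lk)" by (intro exI[of _ "(l,k)"]) auto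
  thus ?thesis unfolding dsel_def by (rule someI_ex)
qed

lemma dsel_X: "i \<in> R \<sigma> \<Longrightarrow> dsel \<sigma> i \<in> X"
  using dsel[of i \<sigma>] unfolding X_def by (cases "dsel \<sigma> i") auto

lemma og: assumes "\<sigma> \<in> T" "i \<in> R \<sigma>"
  shows "og \<sigma> i < n" "\<sigma> (fst (dsel \<sigma> i)) (og \<sigma> i) = b (snd (dsel \<sigma> i))" "og \<sigma> i \<noteq> i"
proof -
  let ?l = "fst (dsel \<sigma> i)" and ?k = "snd (dsel \<sigma> i)"
  have d: "?l < d" "?k < m" "\<sigma> ?l i = a ?k" using dsel[OF assms(2)] by auto
  have p: "\<sigma> ?l permutes {..<n}" using assms(1) d(1) unfolding T_iff by auto
  have bk: "b ?k < n" using b_rng d(2) by auto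
  show "og \<sigma> i < n" unfolding og_def using permutes_in_image[OF permutes_inv[OF p]] bk by auto
  show e: "\<sigma> ?l (og \<sigma> i) = b ?k" unfolding og_def using permutes_inverses(1)[OF p] by simp
  show "og \<sigma> i \<noteq> i" using e d ab_ne by auto
qed

lemma dsel_inj: assumes "\<sigma> \<in> T" shows "inj_on (dsel \<sigma>) (R \<sigma>)"
proof (rule inj_onI)
  fix i j assume ij: "i \<in> R \<sigma>" "j \<in> R \<sigma>" "dsel \<sigma> i = dsel \<sigma> j"
  let ?l = "fst (dsel \<sigma> i)" and ?k = "snd (dsel \<sigma> i)"
  have "\<sigma> ?l i = \<sigma> ?l j" using dsel[OF ij(1)] dsel[OF ij(2)] ij(3) by simp
  moreover have "\<sigma> ?l permutes {..<n}" using assms dsel[OF ij(1)] unfolding T_iff by auto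
  ultimately show "i = j" using permutes_inj by (metis injD)
qed

lemma dep:
  assumes s: "\<sigma> \<in> T" and ind: "indep \<sigma> I" and i: "i \<in> I" and E: "E \<subseteq> X" "E' \<subseteq> X"
    and eq: "E - dsel \<sigma> ` I = E' - dsel \<sigma> ` I" and iff: "dsel \<sigma> i \<in> E \<longleftrightarrow> dsel \<sigma> i \<in> E'"
  shows "fv (Phi E \<sigma>) i = fv (Phi E' \<sigma>) i"
proof -
  have IR: "I \<subseteq> R \<sigma>" and indI: "\<forall>j\<in>I. og \<sigma> j \<notin> I" using ind unfolding indep_def by auto
  have main: "tau (sl E l) (\<sigma> l i) = tau (sl E' l) (\<sigma> l i)" if l: "l < d" for l
  proof (cases rule: tau_cases[OF sl_sub[OF E(1)], of "\<sigma> l i"])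
    case (1 k)
    have "(l, k) \<in> E \<longleftrightarrow> (l, k) \<in> E'"
    proof (cases "(l, k) \<in> dsel \<sigma> ` I")
      case True
      then obtain j where j: "j \<in> I" "(l, k) = dsel \<sigma> j" by auto
      have "\<sigma> l j = a k" using dsel[of j \<sigma>] j IR by (metis fst_conv in_mono snd_conv)
      hence "\<sigma> l j = \<sigma> l i" using 1 by simp
      moreover have "\<sigma> l permutes {..<n}" using s l unfolding T_iff by auto
      ultimately have "j = i" using permutes_inj by (metis injD)
      thus ?thesis using j iff by simp
    next
      case False
      thus ?thesis using eq by blast
    qed
    thus ?thesis using 1 tau_a[OF sl_sub[OF E(1)]] tau_a[OF sl_sub[OF E(2)]] unfolding sl_def by simp
  next
    case (2 k)
    have nD: "(l, k) \<notin> dsel \<sigma> ` I"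
    proof
      assume "(l, k) \<in> dsel \<sigma> ` I"
      then obtain j where j: "j \<in> I" "(l, k) = dsel \<sigma> j" by auto
      have jR: "j \<in> R \<sigma>" using j IR by auto
      have "\<sigma> l (og \<sigma> j) = b k" using og(2)[OF s jR] j(2) by (metis fst_conv snd_conv)
      hence "\<sigma> l (og \<sigma> j) = \<sigma> l i" using 2 by simp
      moreover have "\<sigma> l permutes {..<n}" using s l unfolding T_iff by auto
      ultimately have "og \<sigma> j = i" using permutes_inj by (metis injD)
      thus False using indI j i by auto
    qed
    have "(l, k) \<in> E \<longleftrightarrow> (l, k) \<in> E'" using nD eq by blast
    thus ?thesis using 2 tau_b[OF sl_sub[OF E(1)]] tau_b[OF sl_sub[OF E(2)]] unfolding sl_def by simp
  next
    case 3
    thus ?thesis using tau_other[OF sl_sub[OF E(1)]] tau_other[OF sl_sub[OF E(2)]] by simp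
  qed
  show ?thesis unfolding fv_def Phi_def by (auto intro!: sum.cong simp: main)
qed

lemma jumpl:
  assumes s: "\<sigma> \<in> T" and i: "i \<in> R \<sigma>" and E: "E \<subseteq> X" and nE: "dsel \<sigma> i \<notin> E"
  shows "fv (Phi (insert (dsel \<sigma> i) E) \<sigma>) i - fv (Phi E \<sigma>) i
          = u (b (snd (dsel \<sigma> i))) - u (a (snd (dsel \<sigma> i)))"
proof -
  obtain l0 k0 where lk: "dsel \<sigma> i = (l0, k0)" by fastforce
  have d: "l0 < d" "k0 < m" "\<sigma> l0 i = a k0" using dsel[OF i] lk by auto
  have E': "insert (l0, k0) E \<subseteq> X" using E d unfolding X_def by auto
  have k0: "k0 \<notin> sl E l0" using nE lk unfolding sl_def by auto
  have trm: "u (tau (sl (insert (l0,k0) E) l) (\<sigma> l i)) - u (tau (sl E l) (\<sigma> l i))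
        = (if l = l0 then u (b k0) - u (a k0) else 0)" if "l < d" for l
  proof (cases "l = l0")
    case True
    have "sl (insert (l0,k0) E) l0 = insert k0 (sl E l0)" unfolding sl_def by auto
    moreover have "tau (insert k0 (sl E l0)) (a k0) = b k0"
      using tau_a[of "insert k0 (sl E l0)" k0] sl_sub[OF E] d by auto
    moreover have "tau (sl E l0) (a k0) = a k0"
      using tau_a[OF sl_sub[OF E] d(2)] k0 by simp
    ultimately show ?thesis using True d by simp
  next
    case False
    have "sl (insert (l0,k0) E) l = sl E l" unfolding sl_def using False by auto
    thus ?thesis using False by simp
  qed
  have "fv (Phi (insert (l0,k0) E) \<sigma>) i - fv (Phi E \<sigma>) i
      = (\<Sum>l<d. u (tau (sl (insert (l0,k0) E) l) (\<sigma> l i)) - u (tau (sl E l) (\<sigma> l i)))"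
    unfolding fv_def Phi_def by (simp add: sum_subtractf)
  also have "\<dots> = (\<Sum>l<d. if l = l0 then u (b k0) - u (a k0) else 0)"
    by (rule sum.cong) (auto simp: trm)
  also have "\<dots> = u (b k0) - u (a k0)" using d by simp
  finally show ?thesis using lk by simp
qed

lemma good_or:
  assumes s: "\<sigma> \<in> T" and i: "i \<in> R \<sigma>" and E: "E \<subseteq> X" and nE: "dsel \<sigma> i \<notin> E"
  shows "h \<le> cmod (fv (Phi (insert (dsel \<sigma> i) E) \<sigma>) i) \<or> h \<le> cmod (fv (Phi E \<sigma>) i)"
proof (rule ccontr)
  assume "\<not> ?thesis"
  hence lt: "cmod (fv (Phi (insert (dsel \<sigma> i) E) \<sigma>) i) < h" "cmod (fv (Phi E \<sigma>) i) < h" by auto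
  have "2 * h \<le> cmod (u (a (snd (dsel \<sigma> i))) - u (b (snd (dsel \<sigma> i))))"
    using jump dsel[OF i] by auto
  also have "\<dots> = cmod (fv (Phi (insert (dsel \<sigma> i) E) \<sigma>) i - fv (Phi E \<sigma>) i)"
    using jumpl[OF assms] by (simp add: norm_minus_commute)
  also have "\<dots> \<le> cmod (fv (Phi (insert (dsel \<sigma> i) E) \<sigma>) i) + cmod (fv (Phi E \<sigma>) i)"
    by (rule norm_triangle_ineq4)
  finally show False using lt by simp
qed

end


context lsetup begin

lemma cube:
  assumes s: "\<sigma> \<in> T" and ind: "indep \<sigma> I"
  shows "card {E. E \<subseteq> X \<and> card (good (Phi E \<sigma>) \<inter> I) < q}
          \<le> 2 ^ (m * d - card I) * card {S. S \<subseteq> I \<and> card S < q}"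
proof -
  have IR: "I \<subseteq> R \<sigma>" using ind unfolding indep_def by auto
  have finR: "finite (R \<sigma>)" unfolding R_def by auto
  have finI: "finite I" using IR finR by (rule finite_subset)
  define D where "D = dsel \<sigma> ` I"
  have DX: "D \<subseteq> X" unfolding D_def using IR dsel_X by auto
  have injI: "inj_on (dsel \<sigma>) I" using dsel_inj[OF s] IR by (rule inj_on_subset)
  have cD: "card D = card I" unfolding D_def using injI by (rule card_image)
  define M where "M = card {S. S \<subseteq> I \<and> card S < q}"
  have inner: "card {E1. E1 \<subseteq> D \<and> card (good (Phi (E1 \<union> E2) \<sigma>) \<inter> I) < q} \<le> M"
    if E2: "E2 \<in> Pow (X - D)" for E2
  proof -
    define gi where "gi i = (h \<le> cmod (fv (Phi (insert (dsel \<sigma> i) E2) \<sigma>) i))" for i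
    define psi where "psi E1 = {i \<in> I. (dsel \<sigma> i \<in> E1) = gi i}" for E1
    have inj: "inj_on psi {E1. E1 \<subseteq> D \<and> card (good (Phi (E1 \<union> E2) \<sigma>) \<inter> I) < q}"
    proof (rule inj_onI)
      fix E1 E1' assume A: "E1 \<in> {E1. E1 \<subseteq> D \<and> card (good (Phi (E1 \<union> E2) \<sigma>) \<inter> I) < q}"
        "E1' \<in> {E1. E1 \<subseteq> D \<and> card (good (Phi (E1 \<union> E2) \<sigma>) \<inter> I) < q}" and eq: "psi E1 = psi E1'"
      have "\<And>i. i \<in> I \<Longrightarrow> (dsel \<sigma> i \<in> E1) = (dsel \<sigma> i \<in> E1')"
      proof -
        fix i assume i: "i \<in> I"
        have "i \<in> psi E1 \<longleftrightarrow> i \<in> psi E1'" using eq by simp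
        thus "(dsel \<sigma> i \<in> E1) = (dsel \<sigma> i \<in> E1')" using i unfolding psi_def by auto
      qed
      thus "E1 = E1'" using A unfolding D_def by blast
    qed
    have img: "psi ` {E1. E1 \<subseteq> D \<and> card (good (Phi (E1 \<union> E2) \<sigma>) \<inter> I) < q} \<subseteq> {S. S \<subseteq> I \<and> card S < q}"
    proof clarify
      fix E1 assume E1: "E1 \<subseteq> D" and c: "card (good (Phi (E1 \<union> E2) \<sigma>) \<inter> I) < q"
      have E12: "E1 \<union> E2 \<subseteq> X" using E1 DX E2 by auto
      have E2X: "E2 \<subseteq> X" "E2 \<inter> D = {}" using E2 by auto
      have sub: "psi E1 \<subseteq> good (Phi (E1 \<union> E2) \<sigma>) \<inter> I"
      proof
        fix i assume ip: "i \<in> psi E1"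
        hence i: "i \<in> I" and gi: "(dsel \<sigma> i \<in> E1) = gi i" unfolding psi_def by auto
        have iR: "i \<in> R \<sigma>" using i IR by auto
        have dD: "dsel \<sigma> i \<in> D" using i unfolding D_def by auto
        have ni: "dsel \<sigma> i \<notin> E2" using dD E2X by auto
        have iX: "dsel \<sigma> i \<in> X" using dD DX by auto
        have "h \<le> cmod (fv (Phi (E1 \<union> E2) \<sigma>) i)"
        proof (cases "gi i")
          case True
          hence inE1: "dsel \<sigma> i \<in> E1" using gi by simp
          have "fv (Phi (E1 \<union> E2) \<sigma>) i = fv (Phi (insert (dsel \<sigma> i) E2) \<sigma>) i"
            by (rule dep[OF s ind i E12]) (use E2X E1 iX inE1 in \<open>auto simp: D_def\<close>)
          thus ?thesis using True unfolding gi_def by simp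
        next
          case False
          hence ninE1: "dsel \<sigma> i \<notin> E1" using gi by simp
          have "fv (Phi (E1 \<union> E2) \<sigma>) i = fv (Phi E2 \<sigma>) i"
            by (rule dep[OF s ind i E12]) (use E2X E1 ninE1 ni in \<open>auto simp: D_def\<close>)
          moreover have "h \<le> cmod (fv (Phi E2 \<sigma>) i)"
            using good_or[OF s iR E2X(1) ni] False unfolding gi_def by auto
          ultimately show ?thesis by simp
        qed
        thus "i \<in> good (Phi (E1 \<union> E2) \<sigma>) \<inter> I" using i iR unfolding good_def R_def by auto
      qed
      have "card (psi E1) \<le> card (good (Phi (E1 \<union> E2) \<sigma>) \<inter> I)"
        by (rule card_mono[OF _ sub]) (use finI in auto)
      thus "psi E1 \<subseteq> I \<and> card (psi E1) < q" using c unfolding psi_def by auto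
    qed
    have "finite {S. S \<subseteq> I \<and> card S < q}"
      by (rule finite_subset[of _ "Pow I"]) (use finI in auto)
    thus ?thesis unfolding M_def using card_inj_on_le[OF inj img] by simp
  qed
  have "card {E. E \<subseteq> X \<and> card (good (Phi E \<sigma>) \<inter> I) < q}
      = (\<Sum>E2\<in>Pow (X - D). card {E1. E1 \<subseteq> D \<and> card (good (Phi (E1 \<union> E2) \<sigma>) \<inter> I) < q})"
    by (rule pow_split[OF finite_X DX])
  also have "\<dots> \<le> (\<Sum>E2\<in>Pow (X - D). M)" by (rule sum_mono) (rule inner)
  also have "\<dots> = 2 ^ (card X - card D) * M"
    using finite_X DX by (simp add: card_Pow card_Diff_subset finite_subset)
  finally show ?thesis unfolding M_def using cD card_X by simp
qed

lemma double_count: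
  "card (T \<inter> B) * 2 ^ (m * d) = (\<Sum>\<sigma>\<in>T. card {E. E \<subseteq> X \<and> Phi E \<sigma> \<in> B})"
proof -
  have "(\<Sum>\<sigma>\<in>T. card {E. E \<subseteq> X \<and> Phi E \<sigma> \<in> B})
      = (\<Sum>\<sigma>\<in>T. \<Sum>E\<in>Pow X. if Phi E \<sigma> \<in> B then 1 else 0)"
  proof (rule sum.cong[OF refl])
    fix \<sigma>
    have "{E. E \<subseteq> X \<and> Phi E \<sigma> \<in> B} = {E \<in> Pow X. Phi E \<sigma> \<in> B}" by auto
    thus "card {E. E \<subseteq> X \<and> Phi E \<sigma> \<in> B} = (\<Sum>E\<in>Pow X. if Phi E \<sigma> \<in> B then 1 else 0)"
      using finite_X by (simp add: sum.If_cases Int_def conj_commute)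
  qed
  also have "\<dots> = (\<Sum>E\<in>Pow X. \<Sum>\<sigma>\<in>T. if Phi E \<sigma> \<in> B then 1 else 0)" by (rule sum.swap)
  also have "\<dots> = (\<Sum>E\<in>Pow X. card (T \<inter> B))"
  proof (rule sum.cong[OF refl])
    fix E assume E: "E \<in> Pow X"
    have "(\<Sum>\<sigma>\<in>T. if Phi E \<sigma> \<in> B then 1 else 0) = card {\<sigma> \<in> T. Phi E \<sigma> \<in> B}"
      using finite_T by (simp add: sum.If_cases Int_def)
    also have "\<dots> = card (T \<inter> B)"
    proof (rule bij_betw_same_card)
      show "bij_betw (Phi E) {\<sigma> \<in> T. Phi E \<sigma> \<in> B} (T \<inter> B)"
        by (rule bij_betw_byWitness[where f' = "Phi E"]) (use E in \<open>auto simp: Phi_invol Phi_T\<close>)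
    qed
    finally show "(\<Sum>\<sigma>\<in>T. if Phi E \<sigma> \<in> B then 1 else 0) = card (T \<inter> B)" .
  qed
  also have "\<dots> = card (T \<inter> B) * 2 ^ (m * d)"
    using finite_X by (simp add: card_Pow card_X)
  finally show ?thesis by simp
qed

end


lemma nat_num1: assumes "16 * s \<le> k" shows "(3::nat) ^ (s + k) \<le> 16 ^ (k - s)"
proof -
  have "(3::nat) ^ (s + k) \<le> 3 ^ (2 * k)" using assms by (intro power_increasing) auto
  also have "\<dots> = 9 ^ k" by (simp add: power_mult)
  finally have a: "(3::nat) ^ (s + k) \<le> 9 ^ k" .
  have "(9 ^ k) ^ 16 = ((9::nat) ^ 16) ^ k" by (metis power_mult mult.commute)
  also have "\<dots> \<le> (16 ^ 15) ^ k" by (intro power_mono) auto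
  also have "\<dots> = 16 ^ (15 * k)" by (simp add: power_mult)
  also have "\<dots> \<le> 16 ^ (16 * (k - s))" using assms by (intro power_increasing) auto
  also have "\<dots> = (16 ^ (k - s)) ^ 16" by (simp add: power_mult[symmetric] mult.commute)
  finally have "((9::nat) ^ k) ^ 16 \<le> (16 ^ (k - s)) ^ 16" .
  hence "(9::nat) ^ k \<le> 16 ^ (k - s)" using power_mono_iff[of "(9::nat) ^ k" "16 ^ (k - s)" 16] by simp
  with a show ?thesis by simp
qed

lemma choose_fact_le: assumes "s \<le> n" shows "real (n choose s) * fact s \<le> real n ^ s"
proof -
  have e: "fact s * fact (n - s) * (n choose s) = fact n" using binomial_fact_lemma[OF assms] .
  have "fact n div fact (n - s) = (n choose s) * fact s"
  proof -
    have "fact n = fact (n - s) * ((n choose s) * fact s)" using e by (simp add: mult_ac)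
    thus ?thesis by simp
  qed
  hence "(n choose s) * fact s \<le> n ^ s" using fact_div_fact_le_pow[OF assms] by simp
  hence "real ((n choose s) * fact s) \<le> real (n ^ s)" by (simp only: of_nat_le_iff)
  thus ?thesis by simp
qed

lemma spread_num:
  assumes "16 * s \<le> k" "k \<le> n" "k \<le> M" "n > 0"
  shows "real (n choose s) * (real s / real n) ^ M \<le> exp (- real k)"
proof -
  have sn: "s \<le> n" "s \<le> M" using assms by auto
  have r: "real s / real n \<le> 1/16" using assms by (simp add: field_simps)
  have "real (n choose s) * real s ^ s \<le> real (n choose s) * (3 ^ s * fact s)"
    by (intro mult_left_mono pow_le_fact) auto
  also have "\<dots> = 3 ^ s * (real (n choose s) * fact s)" by simp
  also have "\<dots> \<le> 3 ^ s * real n ^ s" by (intro mult_left_mono choose_fact_le sn) auto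
  finally have c1: "real (n choose s) * real s ^ s \<le> 3 ^ s * real n ^ s" .
  have "real (n choose s) * (real s / real n) ^ M
      = (real (n choose s) * real s ^ s / real n ^ s) * (real s / real n) ^ (M - s)"
  proof -
    have "(real s / real n) ^ M = (real s / real n) ^ s * (real s / real n) ^ (M - s)"
      using sn by (simp add: power_add[symmetric])
    thus ?thesis by (simp add: power_divide)
  qed
  also have "\<dots> \<le> 3 ^ s * (real s / real n) ^ (M - s)"
  proof (intro mult_right_mono)
    show "real (n choose s) * real s ^ s / real n ^ s \<le> 3 ^ s"
      using c1 assms(4) by (simp add: divide_le_eq)
  qed auto
  also have "\<dots> \<le> 3 ^ s * (1/16) ^ (M - s)"
    by (intro mult_left_mono power_mono r) auto
  also have "\<dots> \<le> 3 ^ s * (1/16) ^ (k - s)"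
    using assms by (intro mult_left_mono power_decreasing) auto
  also have "\<dots> \<le> (1/3) ^ k"
  proof -
    have "real ((3::nat) ^ (s + k)) \<le> real (16 ^ (k - s))" using nat_num1[OF assms(1)] by (simp only: of_nat_le_iff)
    hence "(3::real) ^ s * 3 ^ k \<le> 16 ^ (k - s)" by (simp add: power_add)
    thus ?thesis by (simp add: power_one_over field_simps)
  qed
  also have "\<dots> \<le> exp (- real k)"
  proof -
    have "exp (real k) = exp 1 ^ k" by (simp add: exp_of_nat_mult[symmetric])
    also have "\<dots> \<le> 3 ^ k" by (intro power_mono exp_le) auto
    finally show ?thesis by (simp add: exp_minus power_one_over field_simps)
  qed
  finally show ?thesis .
qed

context lsetup begin

lemma spread_count:
  assumes "s \<le> n"
  shows "real (card {\<sigma>\<in>T. card (R \<sigma>) \<le> s}) \<le> real (n choose s) * ((real s / real n) ^ m * fact n) ^ d"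
proof -
  define A where "A = a ` {..<m}"
  define N where "N = {..<n}"
  define Us where "Us = {U. U \<subseteq> N \<and> card U = s}"
  have cA: "card A = m" unfolding A_def using a_inj by (simp add: card_image)
  have AN: "A \<subseteq> N" unfolding A_def N_def using a_rng .
  have fUs: "finite Us" unfolding Us_def N_def by auto
  have cUs: "card Us = n choose s" unfolding Us_def N_def using n_subsets[of "{..<n}" s] by simp
  have sub: "{\<sigma>\<in>T. card (R \<sigma>) \<le> s} \<subseteq> (\<Union>U\<in>Us. PiE {..<d} (\<lambda>_. Fset N U A))"
  proof
    fix \<sigma> assume "\<sigma> \<in> {\<sigma>\<in>T. card (R \<sigma>) \<le> s}"
    hence s: "\<sigma> \<in> T" "card (R \<sigma>) \<le> s" by auto
    have RN: "R \<sigma> \<subseteq> N" unfolding R_def N_def by auto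
    obtain U where U: "R \<sigma> \<subseteq> U" "U \<subseteq> N" "card U = s"
      using exists_subset_between[of "R \<sigma>" s N] s(2) RN assms unfolding N_def by auto
    have "\<sigma> \<in> PiE {..<d} (\<lambda>_. Fset N U A)"
    proof -
      have "\<sigma> \<in> PiE {..<d} (\<lambda>_. {p. p permutes {..<n}})" using s(1) unfolding T_def perm_tuples_def .
      moreover have "\<And>l. l < d \<Longrightarrow> \<sigma> l \<in> Fset N U A"
      proof -
        fix l assume l: "l < d"
        have "\<sigma> l permutes N" using s(1) l unfolding T_iff N_def by auto
        moreover have "\<forall>i\<in>N. \<sigma> l i \<in> A \<longrightarrow> i \<in> U"
          using U l unfolding A_def N_def R_def by auto
        ultimately show "\<sigma> l \<in> Fset N U A" unfolding Fset_def by auto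
      qed
      ultimately show ?thesis unfolding PiE_def by auto
    qed
    thus "\<sigma> \<in> (\<Union>U\<in>Us. PiE {..<d} (\<lambda>_. Fset N U A))" using U unfolding Us_def by auto
  qed
  have fin: "finite (\<Union>U\<in>Us. PiE {..<d} (\<lambda>_. Fset N U A))"
    using fUs unfolding N_def by (intro finite_UN_I finite_PiE Fset_finite) auto
  have "card {\<sigma>\<in>T. card (R \<sigma>) \<le> s} \<le> card (\<Union>U\<in>Us. PiE {..<d} (\<lambda>_. Fset N U A))"
    by (rule card_mono[OF fin sub])
  also have "\<dots> \<le> (\<Sum>U\<in>Us. card (PiE {..<d} (\<lambda>_. Fset N U A)))"
    by (rule card_UN_le[OF fUs])
  finally have c0: "card {\<sigma>\<in>T. card (R \<sigma>) \<le> s} \<le> (\<Sum>U\<in>Us. card (PiE {..<d} (\<lambda>_. Fset N U A)))" .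
  have c: "real (card {\<sigma>\<in>T. card (R \<sigma>) \<le> s}) \<le> (\<Sum>U\<in>Us. real (card (PiE {..<d} (\<lambda>_. Fset N U A))))"
    using c0 unfolding of_nat_sum[symmetric] of_nat_le_iff .
  note c
  also have "\<dots> \<le> (\<Sum>U\<in>Us. ((real s / real n) ^ m * fact n) ^ d)"
  proof (rule sum_mono)
    fix U assume U: "U \<in> Us"
    have "card (PiE {..<d} (\<lambda>_. Fset N U A)) = card (Fset N U A) ^ d" by (simp add: card_PiE)
    moreover have "real (card (Fset N U A)) \<le> (real s / real n) ^ m * fact n"
      using Fset_bound[of N U A] U AN cA unfolding Us_def N_def by auto
    ultimately show "real (card (PiE {..<d} (\<lambda>_. Fset N U A))) \<le> ((real s / real n) ^ m * fact n) ^ d"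
      using power_mono[of "real (card (Fset N U A))" "(real s / real n) ^ m * fact n" d] by simp
  qed
  also have "\<dots> = real (n choose s) * ((real s / real n) ^ m * fact n) ^ d" using cUs by simp
  finally show ?thesis .
qed

end


lemma cube_num: "real (\<Sum>j< r div 8 + 1. r choose j) / 2 ^ r \<le> 8 * exp (- real (r div 8))"
proof -
  define a where "a = r div 8"
  have ar: "8 * a \<le> r" unfolding a_def by simp
  have "real (\<Sum>j< a + 1. r choose j) / 2 ^ r \<le> 8 ^ (a + 1) * (9/8) ^ r / 2 ^ r"
    by (intro divide_right_mono binom_tail) auto
  also have "\<dots> = 8 ^ (a + 1) * (9/16) ^ r"
  proof -
    have "(2::real) ^ r * 8 ^ r = 16 ^ r" by (simp add: power_mult_distrib[symmetric])
    thus ?thesis by (simp add: power_divide field_simps)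
  qed
  also have "\<dots> \<le> 8 ^ (a + 1) * (9/16) ^ (8 * a)"
    using ar by (intro mult_left_mono power_decreasing) auto
  also have "\<dots> = 8 * (8 * (9/16) ^ 8) ^ a" by (simp add: power_mult power_mult_distrib)
  also have "\<dots> \<le> 8 * (1/12) ^ a" by (intro mult_left_mono power_mono) (auto simp: power_divide)
  also have "\<dots> \<le> 8 * exp (- real a)"
  proof -
    have "exp (real a) = exp 1 ^ a" by (simp add: exp_of_nat_mult[symmetric])
    also have "\<dots> \<le> 12 ^ a" using exp_le by (intro power_mono) auto
    finally show ?thesis by (simp add: exp_minus power_one_over field_simps)
  qed
  finally show ?thesis unfolding a_def .
qed

lemma exp5: "(25::real) \<le> exp 5"
proof -
  have "(2::real) \<le> exp 1" using exp_ge_add_one_self[of 1] by simp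
  hence "(2::real) ^ 5 \<le> exp 1 ^ 5" by (intro power_mono) auto
  also have "exp 1 ^ 5 = exp (5::real)" by (simp add: exp_of_nat_mult[symmetric])
  finally show ?thesis by simp
qed

context lsetup begin

lemma R_ne: assumes "\<sigma> \<in> T" "0 < m" "0 < d" shows "R \<sigma> \<noteq> {}"
proof -
  have p: "\<sigma> 0 permutes {..<n}" using assms unfolding T_iff by auto
  have a0: "a 0 < n" using a_rng assms by auto
  have "\<sigma> 0 (inv (\<sigma> 0) (a 0)) = a 0" using permutes_inverses(1)[OF p] by simp
  moreover have "inv (\<sigma> 0) (a 0) < n" using permutes_in_image[OF permutes_inv[OF p]] a0 by auto
  ultimately have "inv (\<sigma> 0) (a 0) \<in> R \<sigma>" unfolding R_def using assms by auto
  thus ?thesis by auto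
qed

lemma get_I: assumes "\<sigma> \<in> T" shows "\<exists>I. indep \<sigma> I \<and> card (R \<sigma>) \<le> 3 * card I"
proof -
  have "finite (R \<sigma>)" unfolding R_def by auto
  moreover have "\<forall>i\<in>R \<sigma>. og \<sigma> i \<noteq> i" using og(3)[OF assms] by auto
  ultimately obtain I where "I \<subseteq> R \<sigma>" "card (R \<sigma>) \<le> 3 * card I" "\<forall>i\<in>I. og \<sigma> i \<notin> I"
    using indep_set[of "R \<sigma>" "og \<sigma>"] by blast
  thus ?thesis unfolding indep_def by auto
qed

lemma card_I_le: assumes "\<sigma> \<in> T" "indep \<sigma> I" shows "card I \<le> m * d"
proof -
  have IR: "I \<subseteq> R \<sigma>" using assms unfolding indep_def by auto
  have "card I = card (dsel \<sigma> ` I)" using inj_on_subset[OF dsel_inj[OF assms(1)] IR] by (simp add: card_image)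
  also have "\<dots> \<le> card X" using IR dsel_X by (intro card_mono finite_X) auto
  finally show ?thesis using card_X by simp
qed

lemma cnt_bound:
  assumes s: "\<sigma> \<in> T" and ind: "indep \<sigma> I"
    and Bprop: "\<And>\<sigma> I q. \<sigma> \<in> T \<Longrightarrow> \<sigma> \<in> B \<Longrightarrow> real k / 3025 < real q \<Longrightarrow> card (good \<sigma> \<inter> I) < q"
    and q: "real k / 3025 < real q"
  shows "card {E. E \<subseteq> X \<and> Phi E \<sigma> \<in> B} \<le> 2 ^ (m * d - card I) * (\<Sum>j<q. card I choose j)"
proof -
  have "card {E. E \<subseteq> X \<and> Phi E \<sigma> \<in> B} \<le> card {E. E \<subseteq> X \<and> card (good (Phi E \<sigma>) \<inter> I) < q}"
  proof (rule card_mono)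
    show "finite {E. E \<subseteq> X \<and> card (good (Phi E \<sigma>) \<inter> I) < q}"
      by (rule finite_subset[of _ "Pow X"]) (use finite_X in auto)
    show "{E. E \<subseteq> X \<and> Phi E \<sigma> \<in> B} \<subseteq> {E. E \<subseteq> X \<and> card (good (Phi E \<sigma>) \<inter> I) < q}"
      using Bprop[OF Phi_T[OF _ s] _ q] by auto
  qed
  also have "\<dots> \<le> 2 ^ (m * d - card I) * card {S. S \<subseteq> I \<and> card S < q}"
    by (rule cube[OF s ind])
  also have "card {S. S \<subseteq> I \<and> card S < q} = (\<Sum>j<q. card I choose j)"
  proof (rule card_small_subsets)
    have "finite (R \<sigma>)" unfolding R_def by auto
    thus "finite I" using ind unfolding indep_def by (auto intro: finite_subset)
  qed
  finally show ?thesis .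
qed

end


context lsetup begin

lemma prob_bound:
  assumes m1: "1 \<le> m" and d1: "1 \<le> d" and kdef: "k = min (m * d) n"
    and Bprop: "\<And>\<sigma> I q. \<sigma> \<in> T \<Longrightarrow> \<sigma> \<in> B \<Longrightarrow> real k / 3025 < real q \<Longrightarrow> card (good \<sigma> \<inter> I) < q"
  shows "real (card (T \<inter> B)) / real (card T) \<le> exp (- real k / 10000)"
proof -
  define I where "I \<sigma> = (SOME I. indep \<sigma> I \<and> card (R \<sigma>) \<le> 3 * card I)" for \<sigma>
  have I: "indep \<sigma> (I \<sigma>)" "card (R \<sigma>) \<le> 3 * card (I \<sigma>)" if "\<sigma> \<in> T" for \<sigma>
    using someI_ex[OF get_I[OF that]] unfolding I_def by auto
  have cT: "0 < card T" using finite_T T_ne by (simp add: card_gt_0_iff)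
  have n1: "1 \<le> n"
  proof -
    have "a 0 \<in> a ` {..<m}" using m1 by auto
    hence "a 0 < n" using a_rng by auto
    thus ?thesis by simp
  qed
  have k1: "1 \<le> k" using kdef m1 d1 n1 by simp
  have kn: "k \<le> n" "k \<le> m * d" using kdef by auto
  let ?md = "m * d"
  have md1: "1 \<le> ?md" using m1 d1 by simp
  have dc: "real (card (T \<inter> B)) * 2 ^ ?md = (\<Sum>\<sigma>\<in>T. real (card {E. E \<subseteq> X \<and> Phi E \<sigma> \<in> B}))"
  proof -
    have "real (card (T \<inter> B) * 2 ^ ?md) = real (\<Sum>\<sigma>\<in>T. card {E. E \<subseteq> X \<and> Phi E \<sigma> \<in> B})"
      using double_count[of B] by (rule arg_cong)
    thus ?thesis by simp
  qed
  show ?thesis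
  proof (cases "k < 3025")
    case True
    have each: "real (card {E. E \<subseteq> X \<and> Phi E \<sigma> \<in> B}) \<le> 2 ^ ?md / 2" if s: "\<sigma> \<in> T" for \<sigma>
    proof -
      have "card {E. E \<subseteq> X \<and> Phi E \<sigma> \<in> B} \<le> 2 ^ (?md - card (I \<sigma>)) * (\<Sum>j<1. card (I \<sigma>) choose j)"
        by (rule cnt_bound[OF s I(1)[OF s] Bprop]) (use True in auto)
      also have "\<dots> = 2 ^ (?md - card (I \<sigma>))" by simp
      also have "\<dots> \<le> 2 ^ (?md - 1)"
      proof -
        have "R \<sigma> \<noteq> {}" using R_ne[OF s] m1 d1 by auto
        hence "card (R \<sigma>) \<ge> 1" unfolding R_def by (simp add: Suc_le_eq card_gt_0_iff)
        hence "card (I \<sigma>) \<ge> 1" using I(2)[OF s] by simp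
        thus ?thesis by (intro power_increasing) auto
      qed
      finally have "real (card {E. E \<subseteq> X \<and> Phi E \<sigma> \<in> B}) \<le> real (2 ^ (?md - 1))"
        by (simp only: of_nat_le_iff)
      hence "real (card {E. E \<subseteq> X \<and> Phi E \<sigma> \<in> B}) \<le> 2 ^ (?md - 1)" by simp
      also have "(2::real) ^ (?md - 1) = 2 ^ ?md / 2"
        using md1 power_diff[of "2::real" 1 ?md] by simp
      finally show ?thesis .
    qed
    have "real (card (T \<inter> B)) * 2 ^ ?md \<le> (\<Sum>\<sigma>\<in>T. 2 ^ ?md / 2)"
      unfolding dc by (rule sum_mono) (rule each)
    hence "real (card (T \<inter> B)) * 2 ^ ?md \<le> real (card T) * 2 ^ ?md / 2" by simp
    hence "real (card (T \<inter> B)) / real (card T) \<le> 1 / 2" using cT by (simp add: field_simps)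
    also have "(1::real) / 2 \<le> 1 - real k / 10000" using True by simp
    also have "\<dots> \<le> exp (- real k / 10000)" using exp_ge_add_one_self[of "- real k / 10000"] by simp
    finally show ?thesis .
  next
    case False
    define s where "s = k div 16"
    have s16: "16 * s \<le> k" "k < 16 * (s + 1)" unfolding s_def by auto
    have sn: "s \<le> n" using s16 kn by simp
    define sp where "sp = {\<sigma>\<in>T. card (R \<sigma>) \<le> s}"
    have each: "real (card {E. E \<subseteq> X \<and> Phi E \<sigma> \<in> B})
          \<le> 2 ^ ?md * (24 * exp (- real k / 384)) + (if \<sigma> \<in> sp then 2 ^ ?md else 0)" if s: "\<sigma> \<in> T" for \<sigma>
    proof (cases "\<sigma> \<in> sp")
      case True
      have "card {E. E \<subseteq> X \<and> Phi E \<sigma> \<in> B} \<le> card (Pow X)"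
        by (rule card_mono) (use finite_X in auto)
      hence "card {E. E \<subseteq> X \<and> Phi E \<sigma> \<in> B} \<le> 2 ^ ?md"
        using finite_X card_X by (simp add: card_Pow mult.commute)
      hence "real (card {E. E \<subseteq> X \<and> Phi E \<sigma> \<in> B}) \<le> real (2 ^ ?md)"
        by (simp only: of_nat_le_iff)
      hence "real (card {E. E \<subseteq> X \<and> Phi E \<sigma> \<in> B}) \<le> 2 ^ ?md" by simp
      moreover have "0 \<le> (2::real) ^ ?md * (24 * exp (- real k / 384))" by simp
      moreover have "(if \<sigma> \<in> sp then (2::real) ^ ?md else 0) = 2 ^ ?md" using True by simp
      ultimately show ?thesis by linarith
    next
      case False
      let ?r = "card (I \<sigma>)"
      have Rs: "s + 1 \<le> card (R \<sigma>)" using False s unfolding sp_def by auto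
      have h1: "16 * (s + 1) \<le> 16 * card (R \<sigma>)" using Rs by simp
      have h2: "16 * card (R \<sigma>) \<le> 48 * ?r" using I(2)[OF s] by simp
      have "k < 48 * ?r" using h1 h2 s16(2) by linarith
      hence "real k < real (48 * ?r)" by (simp only: of_nat_less_iff)
      hence r48: "real k < 48 * real ?r" by simp
      have qk: "real k / 3025 < real (?r div 8 + 1)"
      proof -
        have "?r < 8 * (?r div 8 + 1)" by presburger
        hence "real ?r < real (8 * (?r div 8 + 1))" by (simp only: of_nat_less_iff)
        hence "real ?r < 8 * real (?r div 8 + 1)" by simp
        thus ?thesis using r48 by simp
      qed
      have rmd: "?r \<le> ?md" using card_I_le[OF s I(1)[OF s]] .
      have "card {E. E \<subseteq> X \<and> Phi E \<sigma> \<in> B} \<le> 2 ^ (?md - ?r) * (\<Sum>j<?r div 8 + 1. ?r choose j)"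
        by (rule cnt_bound[OF s I(1)[OF s] Bprop qk])
      hence "real (card {E. E \<subseteq> X \<and> Phi E \<sigma> \<in> B}) \<le> real (2 ^ (?md - ?r) * (\<Sum>j<?r div 8 + 1. ?r choose j))"
        by (simp only: of_nat_le_iff)
      hence "real (card {E. E \<subseteq> X \<and> Phi E \<sigma> \<in> B}) \<le> 2 ^ (?md - ?r) * real (\<Sum>j<?r div 8 + 1. ?r choose j)"
        by simp
      also have "\<dots> = 2 ^ ?md * (real (\<Sum>j<?r div 8 + 1. ?r choose j) / 2 ^ ?r)"
        using rmd by (simp add: power_diff)
      also have "\<dots> \<le> 2 ^ ?md * (8 * exp (- real (?r div 8)))"
        by (intro mult_left_mono cube_num) auto
      also have "\<dots> \<le> 2 ^ ?md * (24 * exp (- real k / 384))"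
      proof -
        have "?r < 8 * (?r div 8) + 8" by presburger
        hence "real ?r < real (8 * (?r div 8) + 8)" by (simp only: of_nat_less_iff)
        hence "real ?r < 8 * real (?r div 8) + 8" by simp
        hence "real k / 384 - 1 \<le> real (?r div 8)" using r48 by simp
        hence "exp (- real (?r div 8)) \<le> exp (1 - real k / 384)" by simp
        also have "\<dots> = exp 1 * exp (- real k / 384)" by (simp add: exp_add[symmetric])
        also have "\<dots> \<le> 3 * exp (- real k / 384)" by (intro mult_right_mono exp_le) auto
        finally show ?thesis by (intro mult_left_mono) auto
      qed
      finally show ?thesis using False by simp
    qed
    have "real (card (T \<inter> B)) * 2 ^ ?md
        \<le> (\<Sum>\<sigma>\<in>T. 2 ^ ?md * (24 * exp (- real k / 384)) + (if \<sigma> \<in> sp then 2 ^ ?md else 0))"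
      unfolding dc by (rule sum_mono) (rule each)
    also have "\<dots> = 2 ^ ?md * (real (card T) * (24 * exp (- real k / 384)) + real (card sp))"
    proof -
      have "(\<Sum>\<sigma>\<in>T. (if \<sigma> \<in> sp then (2::real) ^ ?md else 0)) = 2 ^ ?md * real (card sp)"
        using finite_T by (simp add: sum.If_cases sp_def Int_def)
      thus ?thesis by (simp add: sum.distrib algebra_simps)
    qed
    finally have A: "real (card (T \<inter> B)) \<le> real (card T) * (24 * exp (- real k / 384)) + real (card sp)"
      by simp
    have "real (card sp) \<le> real (n choose s) * ((real s / real n) ^ m * fact n) ^ d"
      unfolding sp_def by (rule spread_count[OF sn])
    also have "\<dots> = real (n choose s) * (real s / real n) ^ ?md * real (card T)"
      by (simp add: card_T power_mult_distrib power_mult)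
    also have "\<dots> \<le> exp (- real k) * real (card T)"
      by (intro mult_right_mono spread_num s16 kn) (use n1 in auto)
    finally have Bsp: "real (card sp) \<le> exp (- real k) * real (card T)" .
    have "real (card (T \<inter> B)) / real (card T) \<le> 24 * exp (- real k / 384) + exp (- real k)"
      using A Bsp cT by (simp add: field_simps)
    also have "\<dots> \<le> 25 * exp (- real k / 384)"
    proof -
      have "exp (- real k) \<le> exp (- real k / 384)" using k1 by simp
      thus ?thesis by simp
    qed
    also have "\<dots> \<le> exp (- real k / 10000)"
    proof -
      have "5 \<le> real k / 384 - real k / 10000" using False by simp
      hence "exp 5 \<le> exp (real k / 384 - real k / 10000)" by simp
      hence "25 \<le> exp (real k / 384 - real k / 10000)" using exp5 by linarith
      hence "25 * exp (- real k / 384) \<le> exp (real k / 384 - real k / 10000) * exp (- real k / 384)"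
        by (intro mult_right_mono) auto
      also have "\<dots> = exp (- real k / 10000)" by (simp add: exp_add[symmetric])
      finally show ?thesis .
    qed
    finally show ?thesis .
  qed
qed

end


lemma min_sqrt: assumes "n > 0" "k = min (m * d) n"
  shows "min (sqrt (real m * real d / real n)) 1 = sqrt (real k / real n)"
proof (cases "m * d \<le> n")
  case True
  hence "real m * real d / real n \<le> 1" using assms by (simp add: field_simps flip: of_nat_mult)
  hence "sqrt (real m * real d / real n) \<le> 1" by simp
  thus ?thesis using True assms by simp
next
  case False
  hence "1 < real m * real d / real n" using assms by (simp add: field_simps flip: of_nat_mult)
  hence "1 < sqrt (real m * real d / real n)" by simp
  thus ?thesis using False assms by simp
qed

lemma delta_sum: "(\<Sum>j<(n::nat). (if p = j then 1 else 0) * (u j :: complex)) = (if p < n then u p else 0)"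
  by (induction n) (auto simp: less_Suc_eq)

theorem lemma3p1:
  shows "\<exists>c cbar :: real. c > 0 \<and> cbar > 0 \<and>
    (\<forall>(\<gamma>0::real) (n::nat) (d::nat) (Z :: nat \<Rightarrow> nat \<Rightarrow> complex) (\<zeta>::complex)
       (u :: nat \<Rightarrow> complex) (J1 :: nat set) (J2 :: nat set) (m::nat) (\<rho>::real).
      \<gamma>0 \<ge> 1 \<longrightarrow> d \<ge> 1 \<longrightarrow>
      (\<forall>i<n. (\<Sum>j<n. Z i j) = \<zeta>) \<longrightarrow>
      (\<forall>j<n. (\<Sum>i<n. cnj (Z i j)) = cnj \<zeta>) \<longrightarrow>
      (\<forall>v. vnorm n v = 1 \<longrightarrow> (\<Sum>j<n. v j) = 0 \<longrightarrow>
            vnorm n (mat_vec n Z v) \<le> real n powr \<gamma>0) \<longrightarrow>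
      J1 \<subseteq> {..<n} \<longrightarrow> J2 \<subseteq> {..<n} \<longrightarrow> J1 \<inter> J2 = {} \<longrightarrow>
      card J1 = m \<longrightarrow> card J2 = m \<longrightarrow> \<rho> > 0 \<longrightarrow>
      (\<forall>j1\<in>J1. \<forall>j2\<in>J2. cmod (u j1 - u j2) \<ge> \<rho> / sqrt (real n)) \<longrightarrow>
      measure_pmf.prob (perm_space n d)
        {ps. vnorm n (mat_vec n (\<lambda>i j. S_mat d ps i j + Z i j) u)
               \<le> c * \<rho> * min (sqrt (real m * real d / real n)) 1}
      \<le> exp (- cbar * real (min (m * d) n)))"
proof -
  have main: "measure_pmf.prob (perm_space n d)
        {ps. vnorm n (mat_vec n (\<lambda>i j. S_mat d ps i j + Z i j) u)
               \<le> 1/110 * \<rho> * min (sqrt (real m * real d / real n)) 1}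
      \<le> exp (- (1/10000) * real (min (m * d) n))"
    if d1: "d \<ge> 1" and hJ1: "J1 \<subseteq> {..<n}" and disj: "J1 \<inter> J2 = {}" and hJ2: "J2 \<subseteq> {..<n}"
      and c1: "card J1 = m" and c2: "card J2 = m" and rho: "\<rho> > 0"
      and sep: "\<forall>j1\<in>J1. \<forall>j2\<in>J2. cmod (u j1 - u j2) \<ge> \<rho> / sqrt (real n)"
    for n d Z u J1 J2 m \<rho>
  proof (cases "m = 0")
    case True
    thus ?thesis by (simp add: measure_pmf.prob_le_1)
  next
    case False
    hence m1: "1 \<le> m" by simp
    have fJ1: "finite J1" using hJ1 by (rule finite_subset) simp
    have fJ2: "finite J2" using hJ2 by (rule finite_subset) simp
    obtain a where a: "bij_betw a {0..<m} J1" using ex_bij_betw_nat_finite[OF fJ1] c1 by auto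
    obtain b where b: "bij_betw b {0..<m} J2" using ex_bij_betw_nat_finite[OF fJ2] c2 by auto
    have aJ: "a ` {..<m} = J1" "inj_on a {..<m}" using a by (auto simp: bij_betw_def atLeast0LessThan)
    have bJ: "b ` {..<m} = J2" "inj_on b {..<m}" using b by (auto simp: bij_betw_def atLeast0LessThan)
    have n1: "0 < n"
    proof -
      have "J1 \<noteq> {}" using c1 m1 by auto
      then obtain j where "j \<in> J1" by auto
      thus ?thesis using hJ1 by auto
    qed
    define h where "h = \<rho> / (2 * sqrt (real n))"
    have h0: "h > 0" unfolding h_def using rho n1 by simp
    have jmp: "\<forall>k<m. 2 * h \<le> cmod (u (a k) - u (b k))"
    proof (intro allI impI)
      fix k assume "k < m"
      hence "a k \<in> J1" "b k \<in> J2" using aJ bJ by auto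
      hence "\<rho> / sqrt (real n) \<le> cmod (u (a k) - u (b k))" using sep by auto
      thus "2 * h \<le> cmod (u (a k) - u (b k))" unfolding h_def by simp
    qed
    interpret L: lsetup n d m a b u "mat_vec n Z u" h
      using aJ bJ hJ1 hJ2 disj jmp by unfold_locales auto
    define k where "k = min (m * d) n"
    define thr where "thr = 1/110 * \<rho> * min (sqrt (real m * real d / real n)) 1"
    define B where "B = {ps. vnorm n (mat_vec n (\<lambda>i j. S_mat d ps i j + Z i j) u) \<le> thr}"
    have thr_eq: "thr = 1/110 * \<rho> * sqrt (real k / real n)" unfolding thr_def using min_sqrt[OF n1 k_def] by simp
    have mv: "mat_vec n (\<lambda>i j. S_mat d \<sigma> i j + Z i j) u i = L.fv \<sigma> i" if s: "\<sigma> \<in> L.T" and i: "i < n" for \<sigma> i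
    proof -
      have "(\<Sum>j<n. S_mat d \<sigma> i j * u j) = (\<Sum>l<d. \<Sum>j<n. (if \<sigma> l i = j then 1 else 0) * u j)"
        unfolding S_mat_def perm_mat_def sum_distrib_right by (rule sum.swap)
      also have "\<dots> = (\<Sum>l<d. u (\<sigma> l i))"
        by (rule sum.cong[OF refl]) (use L.T_range[OF s _ i] in \<open>simp add: delta_sum\<close>)
      finally have e: "(\<Sum>j<n. S_mat d \<sigma> i j * u j) = (\<Sum>l<d. u (\<sigma> l i))" .
      have "L.fv \<sigma> i = (\<Sum>l<d. u (\<sigma> l i)) + mat_vec n Z u i" by (rule L.fv_def)
      moreover have "mat_vec n (\<lambda>i j. S_mat d \<sigma> i j + Z i j) u i = (\<Sum>j<n. S_mat d \<sigma> i j * u j) + mat_vec n Z u i"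
        unfolding mat_vec_def by (simp add: distrib_right sum.distrib)
      ultimately show ?thesis using e by simp
    qed
    have Bprop: "card (L.good \<sigma> \<inter> I) < q"
      if s: "\<sigma> \<in> L.T" and sB: "\<sigma> \<in> B" and q: "real k / 3025 < real q" for \<sigma> I q
    proof (rule ccontr)
      assume "\<not> card (L.good \<sigma> \<inter> I) < q"
      hence cq: "q \<le> card (L.good \<sigma> \<inter> I)" by simp
      let ?v = "mat_vec n (\<lambda>i j. S_mat d \<sigma> i j + Z i j) u"
      have GI: "L.good \<sigma> \<inter> I \<subseteq> {..<n}" unfolding L.good_def by auto
      have "real q * h ^ 2 \<le> real (card (L.good \<sigma> \<inter> I)) * h ^ 2"
        using cq by (intro mult_right_mono) auto
      also have "\<dots> = (\<Sum>i\<in>L.good \<sigma> \<inter> I. h ^ 2)" by simp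
      also have "\<dots> \<le> (\<Sum>i\<in>L.good \<sigma> \<inter> I. cmod (?v i) ^ 2)"
      proof (rule sum_mono)
        fix i assume i: "i \<in> L.good \<sigma> \<inter> I"
        hence "i < n" "h \<le> cmod (L.fv \<sigma> i)" unfolding L.good_def by auto
        hence "h \<le> cmod (?v i)" using mv[OF s] by simp
        thus "h ^ 2 \<le> cmod (?v i) ^ 2" using h0 by (intro power_mono) auto
      qed
      also have "\<dots> \<le> (\<Sum>i<n. cmod (?v i) ^ 2)" by (rule sum_mono2) (use GI in auto)
      also have "\<dots> = vnorm n ?v ^ 2" unfolding vnorm_def by (simp add: sum_nonneg)
      also have "\<dots> \<le> thr ^ 2"
      proof (rule power_mono)
        show "vnorm n ?v \<le> thr" using sB unfolding B_def by simp
        show "0 \<le> vnorm n ?v" unfolding vnorm_def by (simp add: sum_nonneg)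
      qed
      also have "\<dots> = (1/110)^2 * \<rho>^2 * (real k / real n)"
      proof -
        have "sqrt (real k / real n) ^ 2 = real k / real n" by simp
        thus ?thesis unfolding thr_eq by (simp add: power_mult_distrib power_divide)
      qed
      finally have "real q * h ^ 2 \<le> (1/110)^2 * \<rho>^2 * (real k / real n)" .
      moreover have "h ^ 2 = \<rho>^2 / (4 * real n)" unfolding h_def using n1 by (simp add: power_divide power_mult_distrib)
      ultimately have "real q * (\<rho>^2 / (4 * real n)) \<le> (1/110)^2 * \<rho>^2 * (real k / real n)" by simp
      hence "real q * \<rho>^2 \<le> \<rho>^2 * (real k / 3025)" using n1 by (simp add: field_simps)
      hence "real q \<le> real k / 3025" using rho by (simp add: mult.commute)
      thus False using q by simp
    qed
    have pb: "real (card (L.T \<inter> B)) / real (card L.T) \<le> exp (- real k / 10000)"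
      by (rule L.prob_bound[OF m1 d1 k_def]) (rule Bprop)
    have "measure_pmf.prob (perm_space n d) B = real (card (L.T \<inter> B)) / real (card L.T)"
      unfolding perm_space_def L.T_def[symmetric] using L.finite_T L.T_ne by (simp add: measure_pmf_of_set)
    thus ?thesis using pb unfolding B_def thr_def k_def by simp
  qed
  show ?thesis
    apply (rule exI[of _ "1/110::real"])
    apply (rule exI[of _ "1/10000::real"])
    apply (intro conjI allI impI)
      apply simp
     apply simp
    apply (rule main)
           apply assumption+
    done
qed


end
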